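(* Let $k$ and $\tau$ be integers with $k \ge 1$ and $1 \le \tau \le k$. Let $G$ be obtained from a complete bipartite graph with bipartition $(A,B)$, where $|A| \ge 4k$ and $|B| \ge 4k$, by adding all edges among some set of $2k-1$ vertices of $A$ (forming a clique) and all edges among some set $T$ of $\tau$ vertices of $B$. Let $S \subseteq B$ be a set of $k$ vertices with $T \subseteq S$. Then $\tau(G[S]) = \tau - 1$, $G$ does not contain $k$ pairwise vertex-disjoint odd $S$-cycles, and there is no set $X$ of at most $2k-3+\tau(G[S])$ vertices such that $G - X$ is bipartite.
   Context: All graphs are finite and simple. An $S$-cycle is a cycle containing at least one vertex of $S$. For a graph $H$, $\tau(H)$ denotes the vertex cover number of $H$ (minimum size of a vertex set meeting every edge). *)

theory Defs
  imports Main
begin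

text \<open>A graph is given by a vertex set V and an edge relation E (assumed symmetric
and irreflexive where relevant).  All notions below only use edges between vertices of V.\<close>

definition is_cycle :: "'a set \<Rightarrow> ('a \<Rightarrow> 'a \<Rightarrow> bool) \<Rightarrow> 'a list \<Rightarrow> bool" where
  "is_cycle V E xs \<longleftrightarrow> length xs \<ge> 3 \<and> distinct xs \<and> set xs \<subseteq> V \<and>
     (\<forall>i < length xs. E (xs ! i) (xs ! ((i + 1) mod length xs)))"

definition is_odd_S_cycle :: "'a set \<Rightarrow> ('a \<Rightarrow> 'a \<Rightarrow> bool) \<Rightarrow> 'a set \<Rightarrow> 'a list \<Rightarrow> bool" where
  "is_odd_S_cycle V E S xs \<longleftrightarrow> is_cycle V E xs \<and> odd (length xs) \<and> set xs \<inter> S \<noteq> {}"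

definition is_vertex_cover :: "'a set \<Rightarrow> ('a \<Rightarrow> 'a \<Rightarrow> bool) \<Rightarrow> 'a set \<Rightarrow> bool" where
  "is_vertex_cover V E X \<longleftrightarrow> X \<subseteq> V \<and> (\<forall>u\<in>V. \<forall>v\<in>V. E u v \<longrightarrow> u \<in> X \<or> v \<in> X)"

text \<open>Vertex cover number of the (finite) graph (V,E); the induced subgraph G[S]
  is represented as (S,E) for S \<subseteq> V.\<close>
definition vc_number :: "'a set \<Rightarrow> ('a \<Rightarrow> 'a \<Rightarrow> bool) \<Rightarrow> nat" where
  "vc_number V E = Min {card X | X. is_vertex_cover V E X}"

definition bipartite :: "'a set \<Rightarrow> ('a \<Rightarrow> 'a \<Rightarrow> bool) \<Rightarrow> bool" where
  "bipartite V E \<longleftrightarrow> (\<exists>P \<subseteq> V. \<forall>u\<in>V. \<forall>v\<in>V. E u v \<longrightarrow> (u \<in> P \<longleftrightarrow> v \<notin> P))"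

end

theory Submission
  imports Defs
begin

lemma two_elems: "finite F \<Longrightarrow> a \<in> F \<Longrightarrow> b \<in> F \<Longrightarrow> a \<noteq> b \<Longrightarrow> 2 \<le> card F"
proof -
  assume "finite F" "a \<in> F" "b \<in> F" "a \<noteq> b"
  hence "card {a,b} \<le> card F" by (intro card_mono) auto
  thus ?thesis using \<open>a \<noteq> b\<close> by simp
qed

lemma card_ge2_obtain: "\<not> card F \<le> 1 \<Longrightarrow> \<exists>a b. a \<in> F \<and> b \<in> F \<and> a \<noteq> b"
proof -
  assume h: "\<not> card F \<le> 1"
  hence "finite F" using card.infinite by fastforce
  thus ?thesis using h card_le_Suc0_iff_eq[of F] by auto
qed

lemma odd_cycle_mono:
  fixes xs :: "'a list" and P :: "'a \<Rightarrow> bool"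
  assumes "odd (length xs)"
  shows "\<exists>i<length xs. P (xs!i) = P (xs!((i+1) mod length xs))"
proof (rule ccontr)
  define n where "n = length xs"
  assume "\<not> ?thesis"
  hence h: "\<forall>i<n. P(xs!i) \<noteq> P(xs!((i+1) mod n))" unfolding n_def by auto
  have g: "i < n \<Longrightarrow> P(xs!i) = (P(xs!0) \<noteq> odd i)" for i
  proof (induction i)
    case 0 then show ?case by simp
  next
    case (Suc i)
    hence "i < n" by simp
    have a1: "P(xs!i) \<noteq> P(xs!((i+1) mod n))" using h[rule_format, OF \<open>i < n\<close>] .
    have a2: "(i+1) mod n = Suc i" using Suc.prems by simp
    have a3: "P(xs!i) = (P(xs!0) \<noteq> odd i)" using Suc.IH \<open>i < n\<close> by blast
    show ?case using a1 a2 a3 by simp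
  qed
  have n1: "n \<ge> 1" using assms n_def by (cases n) auto
  hence "n - 1 < n" by simp
  have "P(xs!(n-1)) \<noteq> P(xs!((n-1+1) mod n))" using h[rule_format, OF \<open>n - 1 < n\<close>] .
  moreover have "(n-1+1) mod n = 0" using n1 by simp
  moreover have "even (n-1)" using assms n_def n1 by (cases n) auto
  ultimately show False using g[OF \<open>n - 1 < n\<close>] by simp
qed

theorem mainTheorem9:
  fixes A B C T S :: "'a set" and k t :: nat and E :: "'a \<Rightarrow> 'a \<Rightarrow> bool"
  assumes "k \<ge> 1" and "1 \<le> t" and "t \<le> k"
    and "finite A" and "finite B" and "A \<inter> B = {}"
    and "card A \<ge> 4 * k" and "card B \<ge> 4 * k"
    and "C \<subseteq> A" and "card C = 2 * k - 1"
    and "T \<subseteq> B" and "card T = t"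
    and "S \<subseteq> B" and "card S = k" and "T \<subseteq> S"
    and E_def: "\<And>x y. E x y \<longleftrightarrow>
        (x \<in> A \<and> y \<in> B) \<or> (x \<in> B \<and> y \<in> A) \<or>
        (x \<in> C \<and> y \<in> C \<and> x \<noteq> y) \<or> (x \<in> T \<and> y \<in> T \<and> x \<noteq> y)"
  shows "vc_number S E = t - 1 \<and>
       \<not> (\<exists>cyc :: nat \<Rightarrow> 'a list.
              (\<forall>i < k. is_odd_S_cycle (A \<union> B) E S (cyc i)) \<and>
              (\<forall>i < k. \<forall>j < k. i \<noteq> j \<longrightarrow> set (cyc i) \<inter> set (cyc j) = {})) \<and>
       \<not> (\<exists>X \<subseteq> A \<union> B. int (card X) \<le> 2 * int k - 3 + int (vc_number S E) \<and>
              bipartite (A \<union> B - X) E)"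
proof -
  have finS: "finite S" using assms(5,13) finite_subset by blast
  have finT: "finite T" using assms(5,11) finite_subset by blast
  have finC: "finite C" using assms(4,9) finite_subset by blast
  have vc: "vc_number S E = t - 1"
  proof -
    let ?M = "{card X | X. is_vertex_cover S E X}"
    have fin: "finite ?M"
    proof -
      have "?M \<subseteq> card ` Pow S" unfolding is_vertex_cover_def by auto
      thus ?thesis using finS finite_subset by blast
    qed
    obtain x0 where x0: "x0 \<in> T" using assms(2,12) by fastforce
    have cov: "is_vertex_cover S E (T - {x0})"
      unfolding is_vertex_cover_def
    proof (intro conjI ballI impI)
      show "T - {x0} \<subseteq> S" using assms(15) by auto
    next
      fix u v assume "u \<in> S" "v \<in> S" "E u v"
      hence "u \<notin> A" "v \<notin> A" using assms(6,13) by auto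
      with \<open>E u v\<close>[unfolded E_def] have "u \<in> T \<and> v \<in> T \<and> u \<noteq> v" using assms(9) by auto
      thus "u \<in> T - {x0} \<or> v \<in> T - {x0}" by auto
    qed
    have c1: "card (T - {x0}) = t - 1" using x0 finT assms(12) by simp
    have lb: "t - 1 \<le> card X" if "is_vertex_cover S E X" for X
    proof -
      have XS: "X \<subseteq> S" using that unfolding is_vertex_cover_def by blast
      have "card (T - X) \<le> 1"
      proof (rule ccontr)
        assume "\<not> card (T - X) \<le> 1"
        then obtain u v where uv: "u \<in> T - X" "v \<in> T - X" "u \<noteq> v"
          using card_ge2_obtain by blast
        hence "E u v" using E_def by simp
        moreover have "u \<in> S" "v \<in> S" using uv assms(15) by auto
        ultimately show False using that uv unfolding is_vertex_cover_def by blast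
      qed
      moreover have "card T \<le> card (T \<inter> X) + card (T - X)"
        using card_Int_Diff[OF finT, of X] by simp
      moreover have "card (T \<inter> X) \<le> card X"
        using XS finS finite_subset by (metis card_mono inf_le2)
      ultimately show ?thesis using assms(12) by linarith
    qed
    show ?thesis unfolding vc_number_def
      apply (rule Min_eqI[OF fin])
      using lb cov c1 by (auto, metis)
  qed
  have cyc4: "4 \<le> 2 * card (set xs \<inter> S) + card (set xs \<inter> C)"
    if oc: "is_odd_S_cycle (A \<union> B) E S xs" for xs
  proof -
    define n where "n = length xs"
    have cy: "n \<ge> 3" "distinct xs" "set xs \<subseteq> A \<union> B"
      "\<forall>i<n. E (xs!i) (xs!((i+1) mod n))" "odd n" "set xs \<inter> S \<noteq> {}"
      using oc unfolding is_odd_S_cycle_def is_cycle_def n_def by auto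
    obtain i where i: "i < n" "(xs!i \<in> A) = (xs!((i+1) mod n) \<in> A)"
      using odd_cycle_mono[of xs "\<lambda>x. x \<in> A"] cy(5) n_def by auto
    define j where "j = (i+1) mod n"
    have jn: "j < n" using j_def cy(1) by simp
    have "j \<noteq> i"
    proof
      assume "j = i"
      show False
      proof (cases "i + 1 < n")
        case True then show ?thesis using \<open>j = i\<close> j_def by simp
      next
        case False then have "i + 1 = n" using i by simp
        then show ?thesis using \<open>j = i\<close> j_def cy(1) by simp
      qed
    qed
    hence neq: "xs!i \<noteq> xs!j" using nth_eq_iff_index_eq[OF cy(2)] i(1) jn n_def by auto
    have Eij: "E (xs!i) (xs!j)" using cy(4) i(1) j_def by blast
    have mi: "xs!i \<in> set xs" "xs!j \<in> set xs" using i(1) jn n_def by auto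
    have fs: "finite (set xs \<inter> S)" "finite (set xs \<inter> C)" by auto
    have s1: "1 \<le> card (set xs \<inter> S)" using cy(6) fs(1)
      by (simp add: Suc_leI card_gt_0_iff)
    show ?thesis
    proof (cases "xs!i \<in> A")
      case True
      hence "xs!j \<in> A" using i(2) j_def by simp
      hence "xs!i \<in> C \<and> xs!j \<in> C" using True Eij[unfolded E_def] assms(6,11) by auto
      hence "2 \<le> card (set xs \<inter> C)" using two_elems[OF fs(2)] mi neq by auto
      thus ?thesis using s1 by linarith
    next
      case False
      hence "xs!j \<notin> A" using i(2) j_def by simp
      hence "xs!i \<in> B" "xs!j \<in> B" using False mi cy(3) by auto
      hence "xs!i \<in> T \<and> xs!j \<in> T" using Eij[unfolded E_def] assms(6,9) \<open>xs!j \<notin> A\<close> False by auto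
      hence "2 \<le> card (set xs \<inter> S)" using two_elems[OF fs(1)] mi neq assms(15) by auto
      thus ?thesis by linarith
    qed
  qed
  have p2: "\<not> (\<exists>cyc :: nat \<Rightarrow> 'a list.
              (\<forall>i < k. is_odd_S_cycle (A \<union> B) E S (cyc i)) \<and>
              (\<forall>i < k. \<forall>j < k. i \<noteq> j \<longrightarrow> set (cyc i) \<inter> set (cyc j) = {}))"
  proof
    assume "\<exists>cyc :: nat \<Rightarrow> 'a list.
              (\<forall>i < k. is_odd_S_cycle (A \<union> B) E S (cyc i)) \<and>
              (\<forall>i < k. \<forall>j < k. i \<noteq> j \<longrightarrow> set (cyc i) \<inter> set (cyc j) = {})"
    then obtain cyc :: "nat \<Rightarrow> 'a list" where
      oc: "\<forall>i < k. is_odd_S_cycle (A \<union> B) E S (cyc i)" and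
      dj: "\<forall>i < k. \<forall>j < k. i \<noteq> j \<longrightarrow> set (cyc i) \<inter> set (cyc j) = {}" by blast
    have sumS: "(\<Sum>i<k. card (set (cyc i) \<inter> S)) \<le> k"
    proof -
      have "(\<Sum>i<k. card (set (cyc i) \<inter> S)) = card (\<Union>i<k. set (cyc i) \<inter> S)"
        by (rule card_UN_disjoint[symmetric]) (use dj in auto)
      also have "\<dots> \<le> card S" by (rule card_mono[OF finS]) auto
      finally show ?thesis using assms(14) by simp
    qed
    have sumC: "(\<Sum>i<k. card (set (cyc i) \<inter> C)) \<le> 2 * k - 1"
    proof -
      have "(\<Sum>i<k. card (set (cyc i) \<inter> C)) = card (\<Union>i<k. set (cyc i) \<inter> C)"
        by (rule card_UN_disjoint[symmetric]) (use dj in auto)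
      also have "\<dots> \<le> card C" by (rule card_mono[OF finC]) auto
      finally show ?thesis using assms(10) by simp
    qed
    have "(\<Sum>i<k. (4::nat)) \<le> (\<Sum>i<k. 2 * card (set (cyc i) \<inter> S) + card (set (cyc i) \<inter> C))"
      by (rule sum_mono) (use oc cyc4 in auto)
    also have "\<dots> = 2 * (\<Sum>i<k. card (set (cyc i) \<inter> S)) + (\<Sum>i<k. card (set (cyc i) \<inter> C))"
      by (simp add: sum.distrib sum_distrib_left)
    finally show False using sumS sumC assms(1) by simp
  qed
  have p3: "\<not> (\<exists>X \<subseteq> A \<union> B. int (card X) \<le> 2 * int k - 3 + int (vc_number S E) \<and>
              bipartite (A \<union> B - X) E)"
  proof
    assume "\<exists>X \<subseteq> A \<union> B. int (card X) \<le> 2 * int k - 3 + int (vc_number S E) \<and>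
              bipartite (A \<union> B - X) E"
    then obtain X P where X: "X \<subseteq> A \<union> B" "int (card X) \<le> 2 * int k - 3 + int (t - 1)"
      and P: "\<forall>u\<in>A \<union> B - X. \<forall>v\<in>A \<union> B - X. E u v \<longrightarrow> (u \<in> P \<longleftrightarrow> v \<notin> P)"
      unfolding bipartite_def vc by blast
    have finX: "finite X" using X(1) assms(4,5) finite_subset by blast
    have it: "int (t - 1) = int t - 1" using assms(2) by simp
    have cX: "card X < 4 * k" using X(2) assms(1,2,3) it by linarith
    obtain a where a: "a \<in> A" "a \<notin> X"
    proof -
      have "\<not> A \<subseteq> X" using card_mono[OF finX, of A] cX assms(7) by linarith
      thus ?thesis using that by blast
    qed
    obtain b where b: "b \<in> B" "b \<notin> X"
    proof -
      have "\<not> B \<subseteq> X" using card_mono[OF finX, of B] cX assms(8) by linarith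
      thus ?thesis using that by blast
    qed
    have cC: "card (C - X) \<le> 1"
    proof (rule ccontr)
      assume "\<not> card (C - X) \<le> 1"
      then obtain u v where uv: "u \<in> C - X" "v \<in> C - X" "u \<noteq> v"
        using card_ge2_obtain by blast
      have m: "u \<in> A \<union> B - X" "v \<in> A \<union> B - X" "b \<in> A \<union> B - X" using uv b assms(9) by auto
      have "E u v" "E u b" "E v b" using E_def uv b assms(9) by auto
      thus False using P m by blast
    qed
    have cT: "card (T - X) \<le> 1"
    proof (rule ccontr)
      assume "\<not> card (T - X) \<le> 1"
      then obtain u v where uv: "u \<in> T - X" "v \<in> T - X" "u \<noteq> v"
        using card_ge2_obtain by blast
      have m: "u \<in> A \<union> B - X" "v \<in> A \<union> B - X" "a \<in> A \<union> B - X" using uv a assms(11) by auto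
      have "E u v" "E u a" "E v a" using E_def uv a assms(11) by auto
      thus False using P m by blast
    qed
    have "card C = card (C \<inter> X) + card (C - X)" using card_Int_Diff[OF finC, of X] by simp
    moreover have "card T = card (T \<inter> X) + card (T - X)" using card_Int_Diff[OF finT, of X] by simp
    moreover have "card (C \<inter> X) + card (T \<inter> X) = card ((C \<inter> X) \<union> (T \<inter> X))"
      by (rule card_Un_disjoint[symmetric]) (use finC finT assms(6,9,11) in auto)
    moreover have "card ((C \<inter> X) \<union> (T \<inter> X)) \<le> card X" by (rule card_mono[OF finX]) auto
    ultimately show False using cC cT X(2) assms(1,2,10,12) it by linarith
  qed
  show ?thesis by (intro conjI vc p2 p3)
qed

end
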